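(* There exists $\theta_0\in(0,\pi/4)$, depending only on $\alpha$, such that for every $\theta\in(0,\theta_0)$ there exists $a_0(\theta)\ge1$ such that for every $a>a_0(\theta)$ and every $b\in(0,1)$ the following holds: if $p,q\in\mathbb H$ satisfy $p\notin B(q,r_q)$ and $q\notin B(p,r_p)$, then at most one of $p,q$ belongs to $\mathcal P(a,b,\theta)$.
   Context: $\mathbb H=\mathbb R^3$, $p=(x_p,y_p,z_p)$, group law $(x,y,z)\cdot(x',y',z')=(x+x',y+y',z+z'+\tfrac12(xy'-yx'))$, dilations $\delta_\lambda(x,y,z)=(\lambda x,\lambda y,\lambda^2z)$. Fix $\alpha>0$ such that $d_\alpha(p,q)=\inf\{r>0:\delta_{1/r}(p^{-1}\cdot q)\in B_\alpha\}$ is a distance, $B_\alpha$ the closed Euclidean ball of radius $\alpha$ at $0$. $B(p,r)=\{q:d_\alpha(q,p)\le r\}$, $r_p=d_\alpha(0,p)$. $\mathcal P(a,b,\theta)=\{p: x_p>a,\ |z_p|<b,\ |y_p|<x_p\tan\theta\}$. *)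

theory Defs
  imports Complex_Main
begin

type_synonym heis = "real \<times> real \<times> real"

definition hmult :: "heis \<Rightarrow> heis \<Rightarrow> heis" where
  "hmult p q = (case p of (x,y,z) \<Rightarrow> case q of (x',y',z') \<Rightarrow>
      (x + x', y + y', z + z' + (x*y' - y*x') / 2))"

definition hinv :: "heis \<Rightarrow> heis" where
  "hinv p = (case p of (x,y,z) \<Rightarrow> (-x, -y, -z))"

definition hdil :: "real \<Rightarrow> heis \<Rightarrow> heis" where
  "hdil l p = (case p of (x,y,z) \<Rightarrow> (l*x, l*y, l^2*z))"

definition eball :: "real \<Rightarrow> heis set" where
  "eball \<alpha> = {p. case p of (x,y,z) \<Rightarrow> sqrt (x^2 + y^2 + z^2) \<le> \<alpha>}"

definition d_alpha :: "real \<Rightarrow> heis \<Rightarrow> heis \<Rightarrow> real" where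
  "d_alpha \<alpha> p q = Inf {r. r > 0 \<and> hdil (1/r) (hmult (hinv p) q) \<in> eball \<alpha>}"

definition is_distance :: "(heis \<Rightarrow> heis \<Rightarrow> real) \<Rightarrow> bool" where
  "is_distance d \<longleftrightarrow>
     (\<forall>p q. d p q \<ge> 0) \<and> (\<forall>p q. d p q = 0 \<longleftrightarrow> p = q) \<and>
     (\<forall>p q. d p q = d q p) \<and> (\<forall>p q s. d p s \<le> d p q + d q s)"

definition hball :: "real \<Rightarrow> heis \<Rightarrow> real \<Rightarrow> heis set" where
  "hball \<alpha> p r = {q. d_alpha \<alpha> q p \<le> r}"

definition rnorm :: "real \<Rightarrow> heis \<Rightarrow> real" where
  "rnorm \<alpha> p = d_alpha \<alpha> (0,0,0) p"

definition Pset :: "real \<Rightarrow> real \<Rightarrow> real \<Rightarrow> heis set" where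
  "Pset a b \<theta> = {p. case p of (x,y,z) \<Rightarrow> x > a \<and> \<bar>z\<bar> < b \<and> \<bar>y\<bar> < x * tan \<theta>}"

end

theory Submission
  imports Defs
begin

lemma core:
  fixes \<alpha> t a u v yp yq zp zq :: real
  assumes al: "\<alpha> > 0" and t0: "0 < t" and tt: "3*t^2 + 2*\<alpha>^2*t^2 \<le> 1/2"
    and a: "a \<ge> 2*\<alpha>+1" and au: "a < u" and uv: "u \<le> v"
    and yp: "\<bar>yp\<bar> < u*t" and yq: "\<bar>yq\<bar> < v*t" and zp: "\<bar>zp\<bar> < 1" and zq: "\<bar>zq\<bar> < 1"
  shows "(v-u)^2 + (yq-yp)^2 + \<alpha>^2 * (zq - zp + (yp*v - u*yq)/2)^2 / (v^2+yq^2) \<le> v^2+yq^2"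
proof -
  define Z where "Z = zq - zp + (yp*v - u*yq)/2"
  define Q where "Q = v^2+yq^2"
  have u0: "u > 0" using au a al by linarith
  have v0: "v > 0" using u0 uv by linarith
  have Qv: "Q \<ge> v^2" unfolding Q_def by simp
  have h: "(v-u)^2 + (yq-yp)^2 \<le> Q - u*v*(1 - 3*t^2)"
  proof -
    have m: "\<bar>yq*yp\<bar> \<le> (v*t)*(u*t)" unfolding abs_mult
      by (rule mult_mono) (use yp yq u0 v0 t0 in auto)
    have y2: "-(yq*yp) \<le> u*v*t^2" using m abs_ge_minus_self[of "yq*yp"]
      by (simp add: power2_eq_square mult.commute mult.left_commute)
    have "\<bar>yp\<bar> \<le> \<bar>u*t\<bar>" using yp u0 t0 by simp
    hence yp2: "yp^2 \<le> u^2*t^2" by (simp add: abs_le_square_iff power_mult_distrib)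
    have uu: "u^2 \<le> u*v" using u0 uv by (simp add: power2_eq_square)
    have "u^2*t^2 \<le> u*v*t^2" using uu by (simp add: mult_right_mono)
    moreover have "(v-u)^2 + (yq-yp)^2 = v^2 - 2*(u*v) + u^2 + yq^2 - 2*(yq*yp) + yp^2"
      by (simp add: power2_eq_square algebra_simps)
    moreover have "Q - u*v*(1 - 3*t^2) = v^2+yq^2 - u*v + 3*(u*v*t^2)"
      unfolding Q_def by (simp add: algebra_simps)
    ultimately show ?thesis using y2 yp2 uu by linarith
  qed
  have "\<bar>(yp*v - u*yq)/2\<bar> \<le> u*v*t"
  proof -
    have "\<bar>yp*v\<bar> \<le> u*t*v" unfolding abs_mult using yp v0 by (simp add: mult_right_mono)
    moreover have "\<bar>u*yq\<bar> \<le> u*(v*t)" unfolding abs_mult using yq u0 by (simp add: mult_left_mono)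
    moreover have "\<bar>(yp*v - u*yq)/2\<bar> \<le> (\<bar>yp*v\<bar> + \<bar>u*yq\<bar>)/2" by simp
    ultimately show ?thesis by (simp add: algebra_simps)
  qed
  hence Zb: "\<bar>Z\<bar> \<le> 2 + u*v*t" unfolding Z_def using zp zq by linarith
  have Z2: "Z^2 \<le> 8 + 2*u^2*v^2*t^2"
  proof -
    have "\<bar>Z\<bar> \<le> \<bar>2 + u*v*t\<bar>" using Zb by simp
    hence "Z^2 \<le> (2+u*v*t)^2" by (simp add: abs_le_square_iff)
    also have "(2+u*v*t)^2 = 8 + 2*u^2*v^2*t^2 - (2 - u*v*t)^2"
      by (simp add: power2_eq_square algebra_simps)
    also have "\<dots> \<le> 8 + 2*u^2*v^2*t^2" by simp
    finally show ?thesis .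
  qed
  have a2: "a^2 \<ge> 4*\<alpha>"
  proof -
    have "(2*\<alpha>+1)^2 \<le> a^2" using a al by (intro power_mono) auto
    moreover have "(2*\<alpha>+1)^2 = 4*\<alpha>^2 + 4*\<alpha> + 1" by (simp add: power2_eq_square algebra_simps)
    moreover have "0 \<le> \<alpha>^2" by simp
    ultimately show ?thesis by linarith
  qed
  have a4: "a^4 \<ge> 16*\<alpha>^2"
  proof -
    have "(4*\<alpha>)^2 \<le> (a^2)^2" using a2 al by (intro power_mono) auto
    thus ?thesis by (simp add: power2_eq_square power4_eq_xxxx algebra_simps)
  qed
  have "a^4 \<le> u*v^3"
  proof -
    have "a^4 \<le> u^4" using au a al by (intro power_mono) auto
    also have "u^3 \<le> v^3" using uv u0 by (intro power_mono) auto
    hence "u*u^3 \<le> u*v^3" using u0 by (simp add: mult_left_mono)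
    hence "u^4 \<le> u*v^3" by (simp add: power3_eq_cube power4_eq_xxxx)
    finally show ?thesis .
  qed
  hence uv3: "16*\<alpha>^2 \<le> u*v^3" using a4 by linarith
  have uu: "u^2*v^2 \<le> u*v^3"
  proof -
    have "u*(u*v^2) \<le> u*(v*v^2)" using uv u0 v0 by (intro mult_left_mono mult_right_mono) auto
    thus ?thesis by (simp add: power2_eq_square power3_eq_cube algebra_simps)
  qed
  have key: "\<alpha>^2*(8 + 2*u^2*v^2*t^2) \<le> u*v^3*(1-3*t^2)"
  proof -
    have "(2*\<alpha>^2*t^2)*(u^2*v^2) \<le> (2*\<alpha>^2*t^2)*(u*v^3)"
      using uu by (intro mult_left_mono) auto
    moreover have "u*v^3*(2*\<alpha>^2*t^2) \<le> u*v^3*(1/2 - 3*t^2)"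
      using tt u0 v0 by (intro mult_left_mono) auto
    moreover have "\<alpha>^2*(8 + 2*u^2*v^2*t^2) = 8*\<alpha>^2 + (2*\<alpha>^2*t^2)*(u^2*v^2)"
      by (simp add: algebra_simps)
    moreover have "u*v^3*(1-3*t^2) = u*v^3/2 + u*v^3*(1/2 - 3*t^2)"
      by (simp add: algebra_simps)
    moreover have "(2*\<alpha>^2*t^2)*(u*v^3) = u*v^3*(2*\<alpha>^2*t^2)" by simp
    ultimately show ?thesis using uv3 by linarith
  qed
  have "\<alpha>^2 * Z^2 / Q \<le> \<alpha>^2*(8 + 2*u^2*v^2*t^2) / v^2"
  proof -
    have "\<alpha>^2 * Z^2 \<le> \<alpha>^2*(8 + 2*u^2*v^2*t^2)" using Z2 by (simp add: mult_left_mono)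
    moreover have "0 \<le> \<alpha>^2 * Z^2" by simp
    ultimately show ?thesis using Qv v0 by (intro frac_le) auto
  qed
  also have "\<dots> \<le> u*v*(1-3*t^2)"
  proof -
    have e: "u*v*(1-3*t^2) * v^2 = u*v^3*(1-3*t^2)" by (simp add: power2_eq_square power3_eq_cube)
    have k2: "\<alpha>^2*(8 + 2*u^2*v^2*t^2) \<le> u*v*(1-3*t^2) * v^2" using key e by linarith
    have m: "\<alpha>^2*(8 + 2*u^2*v^2*t^2) / v^2 \<le> u*v*(1-3*t^2) \<longleftrightarrow> \<alpha>^2*(8 + 2*u^2*v^2*t^2) \<le> u*v*(1-3*t^2) * v^2"
      using v0 by (intro pos_divide_le_eq) simp
    show ?thesis using m k2 by blast
  qed
  finally show ?thesis using h unfolding Z_def[symmetric] Q_def[symmetric] by linarith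
qed

lemma hmult_inv:
  "hmult (hinv (u,yp,zp)) (v,yq,zq) = (v-u, yq-yp, zq - zp + (yp*v - u*yq)/2)"
  by (simp add: hmult_def hinv_def algebra_simps)

lemma sqrt_le_alpha:
  fixes X \<alpha> :: real
  assumes "X \<le> \<alpha>^2" "\<alpha> > 0" shows "sqrt X \<le> \<alpha>"
proof -
  have "sqrt X \<le> sqrt (\<alpha>^2)" using assms by (intro real_sqrt_le_mono)
  thus ?thesis using assms by simp
qed

lemma dlemma:
  fixes \<alpha> t a u v yp yq zp zq :: real
  assumes al: "\<alpha> > 0" and t0: "0 < t" and tt: "3*t^2 + 2*\<alpha>^2*t^2 \<le> 1/2"
    and a: "a \<ge> 2*\<alpha>+1" and au: "a < u" and uv: "u \<le> v"
    and yp: "\<bar>yp\<bar> < u*t" and yq: "\<bar>yq\<bar> < v*t" and zp: "\<bar>zp\<bar> < 1" and zq: "\<bar>zq\<bar> < 1"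
  shows "d_alpha \<alpha> (u,yp,zp) (v,yq,zq) \<le> sqrt (v^2+yq^2) / \<alpha>"
proof -
  define Q where "Q = v^2+yq^2"
  define R where "R = sqrt Q / \<alpha>"
  define h1 where "h1 = v - u"
  define h2 where "h2 = yq - yp"
  define Z where "Z = zq - zp + (yp*v - u*yq)/2"
  have v0: "v > 0" using au a al uv by linarith
  have Q0: "Q > 0" unfolding Q_def using v0 by (simp add: add_pos_nonneg)
  have R0: "R > 0" unfolding R_def using Q0 al by simp
  have c: "h1^2 + h2^2 + \<alpha>^2 * Z^2 / Q \<le> Q"
    using core[OF assms] unfolding h1_def h2_def Z_def Q_def .
  have R2: "(1/R)^2 = \<alpha>^2/Q" unfolding R_def using Q0 al
    by (simp add: power_divide power_one_over)
  have e: "(1/R*h1)^2 + (1/R*h2)^2 + ((1/R)^2*Z)^2 = \<alpha>^2/Q * (h1^2 + h2^2 + \<alpha>^2 * Z^2 / Q)"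
    unfolding power_mult_distrib R2 using Q0 by (simp add: power2_eq_square field_simps)
  have "\<alpha>^2/Q * (h1^2 + h2^2 + \<alpha>^2 * Z^2 / Q) \<le> \<alpha>^2/Q * Q"
    using c Q0 by (intro mult_left_mono) auto
  hence le: "(1/R*h1)^2 + (1/R*h2)^2 + ((1/R)^2*Z)^2 \<le> \<alpha>^2" using e Q0 by simp
  have mem: "R \<in> {r. r > 0 \<and> hdil (1/r) (hmult (hinv (u,yp,zp)) (v,yq,zq)) \<in> eball \<alpha>}"
    using R0 sqrt_le_alpha[OF le al]
    unfolding hmult_inv h1_def[symmetric] h2_def[symmetric] Z_def[symmetric]
    by (simp add: hdil_def eball_def)
  have "d_alpha \<alpha> (u,yp,zp) (v,yq,zq) \<le> R"
    unfolding d_alpha_def by (rule cInf_lower[OF mem]) (auto intro: bdd_belowI[of _ 0])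
  thus ?thesis unfolding R_def Q_def .
qed

lemma nlow:
  fixes \<alpha> v yq zq :: real
  assumes al: "\<alpha> > 0"
  shows "sqrt (v^2+yq^2) / \<alpha> \<le> rnorm \<alpha> (v,yq,zq)"
proof -
  define S where "S = {r. r > 0 \<and> hdil (1/r) (hmult (hinv (0,0,0)) (v,yq,zq)) \<in> eball \<alpha>}"
  have hq: "hmult (hinv (0,0,0)) (v,yq,zq) = (v,yq,zq)" by (simp add: hmult_def hinv_def)
  define M where "M = v^2+yq^2+zq^2"
  define r0 where "r0 = sqrt M / \<alpha> + 1"
  define c where "c = 1/r0"
  have M0: "M \<ge> 0" unfolding M_def by simp
  have r01: "r0 \<ge> 1" unfolding r0_def using M0 al by simp
  have c0: "c > 0" "c \<le> 1" unfolding c_def using r01 by auto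
  have "sqrt M \<le> \<alpha> * r0" unfolding r0_def using al by (simp add: algebra_simps)
  hence "(sqrt M)^2 \<le> (\<alpha>*r0)^2" using M0 by (intro power_mono) auto
  hence Mr: "M \<le> \<alpha>^2 * r0^2" using M0 by (simp add: power_mult_distrib)
  have "c^2 * M \<le> c^2 * (\<alpha>^2 * r0^2)" using Mr by (intro mult_left_mono) auto
  also have "c^2 * (\<alpha>^2 * r0^2) = \<alpha>^2" unfolding c_def using r01
    by (simp add: power_one_over)
  finally have cM: "c^2 * M \<le> \<alpha>^2" .
  have c2: "c^2 \<le> 1" using c0 by (simp add: power_le_one)
  have "(c^2*zq)^2 \<le> c^2*zq^2"
  proof -
    have "(c^2*zq)^2 = c^2 * (c^2*zq^2)" by (simp add: power2_eq_square algebra_simps)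
    also have "\<dots> \<le> 1 * (c^2*zq^2)" using c2 by (intro mult_right_mono) auto
    finally show ?thesis by simp
  qed
  hence "(c*v)^2 + (c*yq)^2 + (c^2*zq)^2 \<le> \<alpha>^2" using cM unfolding M_def
    by (simp add: power_mult_distrib algebra_simps)
  hence "r0 \<in> S" unfolding S_def hq using r01 sqrt_le_alpha[OF _ al]
    by (simp add: hdil_def eball_def c_def)
  hence ne: "S \<noteq> {}" by auto
  have lb: "sqrt (v^2+yq^2) / \<alpha> \<le> r" if r: "r \<in> S" for r
  proof -
    have r0': "r > 0" using r unfolding S_def by simp
    have s: "sqrt ((1/r*v)^2 + (1/r*yq)^2 + ((1/r)^2*zq)^2) \<le> \<alpha>"
      using r unfolding S_def hq by (simp add: hdil_def eball_def)
    have "(1/r*v)^2 + (1/r*yq)^2 + ((1/r)^2*zq)^2 = (sqrt ((1/r*v)^2 + (1/r*yq)^2 + ((1/r)^2*zq)^2))^2"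
      by simp
    also have "\<dots> \<le> \<alpha>^2" using s by (intro power_mono) auto
    finally have "(1/r*v)^2 + (1/r*yq)^2 \<le> \<alpha>^2" by (smt (verit) zero_le_power2)
    hence "(v^2 + yq^2)/r^2 \<le> \<alpha>^2" by (simp add: power_mult_distrib power_one_over add_divide_distrib power_divide)
    hence "v^2 + yq^2 \<le> \<alpha>^2 * r^2" using r0' by (simp add: pos_divide_le_eq)
    hence "sqrt (v^2 + yq^2) \<le> sqrt ((\<alpha>*r)^2)" by (intro real_sqrt_le_mono) (simp add: power_mult_distrib)
    hence "sqrt (v^2 + yq^2) \<le> \<alpha> * r" using al r0' by simp
    thus ?thesis using al by (simp add: pos_divide_le_eq mult.commute)
  qed
  have "sqrt (v^2+yq^2) / \<alpha> \<le> Inf S" by (rule cInf_greatest[OF ne lb])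
  thus ?thesis unfolding rnorm_def d_alpha_def S_def .
qed

theorem lemma2p3:
  fixes \<alpha> :: real
  assumes "\<alpha> > 0" and "is_distance (d_alpha \<alpha>)"
  shows "\<exists>\<theta>0. 0 < \<theta>0 \<and> \<theta>0 < pi/4 \<and>
    (\<forall>\<theta>. 0 < \<theta> \<and> \<theta> < \<theta>0 \<longrightarrow>
      (\<exists>a0. a0 \<ge> 1 \<and>
        (\<forall>a b. a > a0 \<and> 0 < b \<and> b < 1 \<longrightarrow>
          (\<forall>p q. p \<notin> hball \<alpha> q (rnorm \<alpha> q) \<and> q \<notin> hball \<alpha> p (rnorm \<alpha> p) \<longrightarrow>
             \<not> (p \<in> Pset a b \<theta> \<and> q \<in> Pset a b \<theta>)))))"
proof -
  have al: "\<alpha> > 0" using assms(1) .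
  define s where "s = 1/(2*(\<alpha>+2))"
  have s0: "0 < s" "s < 1" unfolding s_def using al by auto
  have sb: "(3+2*\<alpha>^2)*s^2 \<le> 1/2"
  proof -
    have "(2*(\<alpha>+2))^2 = 4*\<alpha>^2+16*\<alpha>+16" by (simp add: power2_eq_square algebra_simps)
    hence "(3+2*\<alpha>^2)*s^2 = (3+2*\<alpha>^2)/(4*\<alpha>^2+16*\<alpha>+16)"
      unfolding s_def by (simp add: power_one_over)
    moreover have "(3+2*\<alpha>^2)/(4*\<alpha>^2+16*\<alpha>+16) \<le> 1/2"
    proof -
      have p: "0 < 4*\<alpha>^2+16*\<alpha>+16" using al by (simp add: add_pos_pos)
      have "3+2*\<alpha>^2 \<le> 1/2*(4*\<alpha>^2+16*\<alpha>+16)" using al by simp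
      thus ?thesis using p by (simp add: pos_divide_le_eq)
    qed
    ultimately show ?thesis by simp
  qed
  define \<theta>0 where "\<theta>0 = arctan s"
  have th0: "0 < \<theta>0" unfolding \<theta>0_def using s0 by simp
  have th1: "\<theta>0 < pi/4" unfolding \<theta>0_def using s0 arctan_less_iff[of s 1] arctan_one by simp
  have th2: "\<theta>0 < pi/2" unfolding \<theta>0_def by (rule arctan_ubound)
  show ?thesis
  proof (rule exI[of _ \<theta>0], intro conjI allI impI)
    show "0 < \<theta>0" "\<theta>0 < pi/4" using th0 th1 by auto
    fix \<theta> assume th: "0 < \<theta> \<and> \<theta> < \<theta>0"
    define t where "t = tan \<theta>"
    have t0: "0 < t" unfolding t_def using th th2 by (intro tan_gt_zero) auto
    have ts: "t < s" unfolding t_def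
      using tan_monotone[of \<theta> \<theta>0] th th2 tan_arctan[of s] unfolding \<theta>0_def by auto
    have "t^2 \<le> s^2" using t0 ts by (intro power_mono) auto
    hence "(3+2*\<alpha>^2)*t^2 \<le> (3+2*\<alpha>^2)*s^2" by (intro mult_left_mono) auto
    hence tt: "3*t^2 + 2*\<alpha>^2*t^2 \<le> 1/2" using sb by (simp add: algebra_simps)
    show "\<exists>a0. a0 \<ge> 1 \<and>
        (\<forall>a b. a > a0 \<and> 0 < b \<and> b < 1 \<longrightarrow>
          (\<forall>p q. p \<notin> hball \<alpha> q (rnorm \<alpha> q) \<and> q \<notin> hball \<alpha> p (rnorm \<alpha> p) \<longrightarrow>
             \<not> (p \<in> Pset a b \<theta> \<and> q \<in> Pset a b \<theta>)))"
    proof (rule exI[of _ "2*\<alpha>+1"], intro conjI allI impI notI)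
      show "1 \<le> 2*\<alpha>+1" using al by simp
      fix a b p q
      assume ab: "2*\<alpha>+1 < a \<and> 0 < b \<and> b < 1"
        and nb: "p \<notin> hball \<alpha> q (rnorm \<alpha> q) \<and> q \<notin> hball \<alpha> p (rnorm \<alpha> p)"
        and PP: "p \<in> Pset a b \<theta> \<and> q \<in> Pset a b \<theta>"
      obtain u yp zp where p: "p = (u,yp,zp)" by (cases p) auto
      obtain v yq zq where q: "q = (v,yq,zq)" by (cases q) auto
      have a: "a \<ge> 2*\<alpha>+1" using ab by simp
      have P1: "a < u" "\<bar>zp\<bar> < 1" "\<bar>yp\<bar> < u*t"
        using PP ab unfolding p Pset_def t_def by auto
      have P2: "a < v" "\<bar>zq\<bar> < 1" "\<bar>yq\<bar> < v*t"
        using PP ab unfolding q Pset_def t_def by auto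
      show False
      proof (cases "u \<le> v")
        case True
        have "d_alpha \<alpha> p q \<le> rnorm \<alpha> q"
          using dlemma[OF al t0 tt a P1(1) True P1(3) P2(3) P1(2) P2(2)] nlow[OF al, of v yq zq]
          unfolding p q by linarith
        thus False using nb unfolding hball_def by simp
      next
        case False
        hence vu: "v \<le> u" by simp
        have "d_alpha \<alpha> q p \<le> rnorm \<alpha> p"
          using dlemma[OF al t0 tt a P2(1) vu P2(3) P1(3) P2(2) P1(2)] nlow[OF al, of u yp zp]
          unfolding p q by linarith
        thus False using nb unfolding hball_def by simp
      qed
    qed
  qed
qed

end
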